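(* Let $n\ge 2$ and $1\le k\le n-1$ be integers, $T>0$, and $t\in\{1,\dots,n\}$. Let $X_1,\dots,X_n$ be independent random variables each uniformly distributed on $[0,T]$, let $Y_{t,1}=X_t$ and $$Y_{t,2}=\min\Big(X_t,\ \max\big(\mathrm{mink}(\{X_i\}_{i\neq t})\big)\Big),$$ where $\max(\mathrm{mink}(\{X_i\}_{i\neq t}))$ denotes the $k$-th smallest of the $n-1$ values $X_i$, $i\ne t$. Then $$\Gamma_U:=\frac{E[Y_{t,1}]-E[Y_{t,2}]}{E[Y_{t,1}]}=\frac{(n-k)(n-k+1)}{n(n+1)}.$$
   Context: In an $(n,k,m)$ systematic MDS array code stored on $n$ nodes (any $k$ nodes recover all data), $X_i$ is the access latency of node $i$; $Y_{t,1}$ is the latency of directly accessing node $t$ (DA method) and $Y_{t,2}$ is the latency of the proposed accelerated access algorithms (AAKL/AAUL). $\Gamma_U$ is the relative reduction in expected latency. *)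

theory Defs
  imports "HOL-Probability.Probability"
begin

text \<open>The k-th smallest element (k counted from 1) of a list of reals,
  i.e. the maximum of the k smallest values (mink).\<close>
definition kth_smallest :: "nat \<Rightarrow> real list \<Rightarrow> real" where
  "kth_smallest k xs = sort xs ! (k - 1)"

end

theory Submission
  imports Defs
begin

lemma sorted_nth_le_iff:
  fixes ys :: "real list"
  assumes "sorted ys" "i < length ys"
  shows "ys ! i \<le> s \<longleftrightarrow> i < length (filter (\<lambda>x. x \<le> s) ys)"
  using assms
proof (induction ys arbitrary: i)
  case Nil then show ?case by simp
next
  case (Cons y ys)
  show ?case
  proof (cases "y \<le> s")
    case True
    then show ?thesis using Cons by (cases i) auto
  next
    case False
    have "\<forall>x\<in>set ys. s < x" using Cons.prems False by auto
    then have "filter (\<lambda>x. x \<le> s) ys = []" by (auto simp: filter_empty_conv)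
    moreover have "s < (y#ys) ! i"
    proof (cases i)
      case 0 then show ?thesis using False by simp
    next
      case (Suc j)
      then have "(y#ys)!i \<in> set ys" using Cons.prems by auto
      then show ?thesis using Cons.prems False by auto
    qed
    ultimately show ?thesis using False by auto
  qed
qed

lemma kth_iff:
  assumes "1 \<le> k" "k \<le> length xs"
  shows "s < kth_smallest k xs \<longleftrightarrow> length (filter (\<lambda>x. x \<le> s) xs) < k"
proof -
  have "length (filter (\<lambda>x. x \<le> s) (sort xs)) = length (filter (\<lambda>x. x \<le> s) xs)"
    by (metis mset_filter mset_sort size_mset)
  moreover have "sort xs ! (k-1) \<le> s \<longleftrightarrow> k - 1 < length (filter (\<lambda>x. x \<le> s) (sort xs))"
    using assms by (intro sorted_nth_le_iff) auto
  ultimately show ?thesis using assms unfolding kth_smallest_def by linarith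
qed

lemma kth_nonneg:
  assumes "1 \<le> k" "k \<le> length xs" "\<forall>x\<in>set xs. 0 \<le> x"
  shows "0 \<le> kth_smallest k xs"
proof -
  have "sort xs ! (k-1) \<in> set (sort xs)" using assms by (intro nth_mem) auto
  then show ?thesis using assms unfolding kth_smallest_def by auto
qed

lemma beta_nat:
  "((\<lambda>u::real. u^a * (1-u)^b) has_integral (fact a * fact b / fact (a+b+1))) {0..1}"
proof -
  have B: "((\<lambda>t. t powr (real a + 1 - 1) * (1 - t) powr (real b + 1 - 1)) has_integral Beta (real a + 1) (real b + 1)) {0..1}"
    by (rule has_integral_Beta_real) auto
  have "Beta (real a + 1) (real b + 1) = fact a * fact b / fact (a+b+1)"
  proof -
    have "Gamma (real a + 1) = fact a" using Gamma_fact[of a] by (simp add: add.commute)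
    moreover have "Gamma (real b + 1) = fact b" using Gamma_fact[of b] by (simp add: add.commute)
    moreover have "Gamma (real a + 1 + (real b + 1)) = fact (a+b+1)"
      using Gamma_fact[of "a+b+1"] by (simp add: add_ac)
    ultimately show ?thesis by (simp add: Beta_def)
  qed
  with B have B': "((\<lambda>t. t powr real a * (1 - t) powr real b) has_integral (fact a * fact b / fact (a+b+1))) {0..1}"
    by simp
  show ?thesis
  proof (rule has_integral_spike_finite[OF _ _ B'])
    show "finite {0::real,1}" by simp
    fix x :: real assume "x \<in> {0..1} - {0,1}"
    then have "0 < x" "x < 1" by auto
    then show "x^a * (1-x)^b = x powr real a * (1 - x) powr real b"
      by (simp add: powr_realpow)
  qed
qed



lemma beta_scaled:
  fixes T :: real assumes T: "T > 0"
  assumes I: "((\<lambda>u::real. u^a * (1-u)^b) has_integral I) {0..1}"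
  shows "((\<lambda>s. (s/T)^a * ((T-s)/T)^b) has_integral T * I) {0..T}"
proof -
  have "((\<lambda>x. (\<lambda>u::real. u^a * (1-u)^b) ((1/T) *\<^sub>R x + 0)) has_integral (I /\<^sub>R (1/T) ^ DIM(real)))
           (cbox ((0 - 0) /\<^sub>R (1/T)) ((1 - 0) /\<^sub>R (1/T)))"
    using I T by (intro has_integral_affinity') auto
  moreover have "(\<lambda>x. (\<lambda>u::real. u^a * (1-u)^b) ((1/T) *\<^sub>R x + 0)) = (\<lambda>s. (s/T)^a * ((T-s)/T)^b)"
    using T by (auto simp: field_simps)
  ultimately show ?thesis by (simp add: mult.commute)
qed

lemma (in prob_space) tail_formula:
  assumes W[measurable]: "W \<in> borel_measurable M"
  shows "(\<integral>\<^sup>+\<omega>. ennreal (W \<omega>) \<partial>M) =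
         (\<integral>\<^sup>+s. indicator {0..} s * ennreal (prob {\<omega>\<in>space M. s < W \<omega>}) \<partial>lborel)"
proof -
  interpret P: pair_sigma_finite M lborel
    by (rule pair_sigma_finite.intro[OF prob_space_imp_sigma_finite[OF prob_space_axioms]])
       (rule lborel.sigma_finite_measure_axioms)
  have "(\<integral>\<^sup>+\<omega>. ennreal (W \<omega>) \<partial>M) =
        (\<integral>\<^sup>+\<omega>. (\<integral>\<^sup>+s. indicator {0..} s * indicator {\<omega>\<in>space M. s < W \<omega>} \<omega> \<partial>lborel) \<partial>M)"
  proof (rule nn_integral_cong)
    fix \<omega> assume \<omega>: "\<omega> \<in> space M"
    have "(\<integral>\<^sup>+s. indicator {0..} s * indicator {\<omega>\<in>space M. s < W \<omega>} \<omega> \<partial>lborel)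
          = (\<integral>\<^sup>+s. indicator {0..<W \<omega>} s \<partial>lborel)"
      using \<omega> by (intro nn_integral_cong) (auto split: split_indicator)
    also have "\<dots> = emeasure lborel {0..<W \<omega>}" by simp
    also have "\<dots> = ennreal (W \<omega>)"
      by (cases "0 \<le> W \<omega>") (auto simp: ennreal_neg)
    finally show "ennreal (W \<omega>) = (\<integral>\<^sup>+s. indicator {0..} s * indicator {\<omega>\<in>space M. s < W \<omega>} \<omega> \<partial>lborel)"
      by simp
  qed
  also have "\<dots> = (\<integral>\<^sup>+s. (\<integral>\<^sup>+\<omega>. indicator {0..} s * indicator {\<omega>\<in>space M. s < W \<omega>} \<omega> \<partial>M) \<partial>lborel)"
    by (rule P.Fubini'[symmetric]) measurable
  also have "\<dots> = (\<integral>\<^sup>+s. indicator {0..} s * ennreal (prob {\<omega>\<in>space M. s < W \<omega>}) \<partial>lborel)"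
  proof (rule nn_integral_cong)
    fix s :: real
    have "(\<integral>\<^sup>+\<omega>. indicator {0..} s * indicator {\<omega>\<in>space M. s < W \<omega>} \<omega> \<partial>M)
        = indicator {0..} s * emeasure M {\<omega>\<in>space M. s < W \<omega>}"
      by (subst nn_integral_cmult) auto
    then show "(\<integral>\<^sup>+\<omega>. indicator {0..} s * indicator {\<omega>\<in>space M. s < W \<omega>} \<omega> \<partial>M) =
        indicator {0..} s * ennreal (prob {\<omega>\<in>space M. s < W \<omega>})"
      by (simp add: emeasure_eq_measure)
  qed
  finally show ?thesis .
qed


lemma (in prob_space) prob_unif:
  fixes X :: "'a \<Rightarrow> real"
  assumes X[measurable]: "X \<in> borel_measurable M"
    and D: "distr M borel X = uniform_measure lborel {0..T}" and T: "T > 0"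
    and that: "A \<in> sets borel"
  shows "prob (X -` A \<inter> space M) = measure lborel ({0..T} \<inter> A) / T"
proof -
  have "prob (X -` A \<inter> space M) = measure (distr M borel X) A"
    using that by (simp add: measure_distr)
  also have "\<dots> = measure lborel ({0..T} \<inter> A) / measure lborel {0..T}"
    unfolding D using T that by (intro measure_uniform_measure) auto
  finally show ?thesis using T by simp
qed

lemma (in prob_space) prob_le:
  fixes X :: "'a \<Rightarrow> real"
  assumes X[measurable]: "X \<in> borel_measurable M"
    and D: "distr M borel X = uniform_measure lborel {0..T}" and T: "T > 0"
    and s: "0 \<le> s" "s \<le> T"
  shows "prob (X -` {..s} \<inter> space M) = s / T"
    and "prob (X -` {s<..} \<inter> space M) = (T - s) / T"
proof -
  have "{0..T} \<inter> {..s} = {0..s}" using s by auto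
  then show "prob (X -` {..s} \<inter> space M) = s / T"
    using prob_unif[OF X D T, of "{..s}"] s by simp
  have "{0..T} \<inter> {s<..} = {s<..T}" using s by auto
  then show "prob (X -` {s<..} \<inter> space M) = (T - s) / T"
    using prob_unif[OF X D T, of "{s<..}"] s by simp
qed

lemma (in prob_space) prob_gt_big:
  fixes X :: "'a \<Rightarrow> real"
  assumes X[measurable]: "X \<in> borel_measurable M"
    and D: "distr M borel X = uniform_measure lborel {0..T}" and T: "T > 0"
    and s: "T < s"
  shows "prob (X -` {s<..} \<inter> space M) = 0"
proof -
  have "{0..T} \<inter> {s<..} = {}" using s by auto
  then show ?thesis using prob_unif[OF X D T, of "{s<..}"] by simp
qed

lemma (in prob_space) prob_event:
  fixes X :: "'i \<Rightarrow> 'a \<Rightarrow> real" and I :: "'i set"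
  assumes I: "finite I" "t \<in> I"
    and X[measurable]: "\<And>i. i \<in> I \<Longrightarrow> X i \<in> borel_measurable M"
    and ind: "indep_vars (\<lambda>_. borel) X I"
    and D: "\<And>i. i \<in> I \<Longrightarrow> distr M borel (X i) = uniform_measure lborel {0..T}"
    and T: "T > 0" and s: "0 \<le> s" "s \<le> T"
  shows "prob {\<omega>\<in>space M. s < X t \<omega> \<and> card {i\<in>I-{t}. X i \<omega> \<le> s} < k}
       = (\<Sum>j<k. real ((card I - 1) choose j) * (s/T)^j * ((T-s)/T)^(card I - j))"
proof -
  define Oth where "Oth = I - {t}"
  define B where "B = (\<lambda>(S::'i set) (i::'i). if i \<in> S then {..s} else ({s<..}::real set))"
  define F where "F = (\<lambda>S. \<Inter>i\<in>I. X i -` B S i \<inter> space M)"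
  define SS where "SS = {S. S \<subseteq> Oth \<and> card S < k}"
  have Fmem: "\<omega> \<in> F S \<longleftrightarrow> \<omega> \<in> space M \<and> (\<forall>i\<in>I. X i \<omega> \<in> B S i)" for \<omega> S
    using I by (auto simp: F_def)
  have fO: "finite Oth" using I by (simp add: Oth_def)
  have cO: "card Oth = card I - 1" using I by (simp add: Oth_def)
  have fSS: "finite SS" unfolding SS_def using fO by (auto intro: finite_subset[of _ "Pow Oth"])
  have Bs: "B S i \<in> sets borel" for S i by (simp add: B_def)
  have Fs: "F S \<in> events" for S
    unfolding F_def using I Bs by (intro sets.finite_INT) auto
  have E: "{\<omega>\<in>space M. s < X t \<omega> \<and> card {i\<in>Oth. X i \<omega> \<le> s} < k} = (\<Union>S\<in>SS. F S)"
  proof (intro equalityI subsetI)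
    fix \<omega> assume w: "\<omega> \<in> {\<omega>\<in>space M. s < X t \<omega> \<and> card {i\<in>Oth. X i \<omega> \<le> s} < k}"
    define S where "S = {i\<in>Oth. X i \<omega> \<le> s}"
    have "S \<in> SS" using w by (auto simp: SS_def S_def)
    moreover have "\<omega> \<in> F S" using w I
      by (auto simp: Fmem B_def S_def Oth_def)
    ultimately show "\<omega> \<in> (\<Union>S\<in>SS. F S)" by blast
  next
    fix \<omega> assume "\<omega> \<in> (\<Union>S\<in>SS. F S)"
    then obtain S where S: "S \<in> SS" "\<omega> \<in> F S" by blast
    have sp: "\<omega> \<in> space M" using S I by (auto simp: Fmem)
    have "{i\<in>Oth. X i \<omega> \<le> s} = S"
    proof (intro equalityI subsetI)
      fix i assume "i \<in> {i\<in>Oth. X i \<omega> \<le> s}"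
      then show "i \<in> S" using S by (auto simp: Fmem B_def Oth_def split: if_splits)
    next
      fix i assume "i \<in> S"
      moreover have "i \<in> I" using \<open>i \<in> S\<close> S by (auto simp: SS_def Oth_def)
      ultimately show "i \<in> {i\<in>Oth. X i \<omega> \<le> s}" using S by (force simp: Fmem B_def Oth_def SS_def)
    qed
    moreover have "t \<notin> S" using S by (auto simp: SS_def Oth_def)
    then have "s < X t \<omega>" using S I by (auto simp: Fmem B_def)
    ultimately show "\<omega> \<in> {\<omega>\<in>space M. s < X t \<omega> \<and> card {i\<in>Oth. X i \<omega> \<le> s} < k}"
      using S sp by (auto simp: SS_def)
  qed
  have disj: "disjoint_family_on F SS"
    unfolding disjoint_family_on_def
  proof (intro ballI impI)
    fix S S' assume SS: "S \<in> SS" "S' \<in> SS" "S \<noteq> S'"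
    show "F S \<inter> F S' = {}"
    proof (rule ccontr)
      assume "F S \<inter> F S' \<noteq> {}"
      then obtain \<omega> where w: "\<omega> \<in> F S" "\<omega> \<in> F S'" by blast
      have "S = S'"
      proof (intro equalityI subsetI)
        fix i assume "i \<in> S"
        then have "i \<in> I" using SS by (auto simp: SS_def Oth_def)
        then have "X i \<omega> \<in> B S i" "X i \<omega> \<in> B S' i" using w by (auto simp: Fmem)
        then show "i \<in> S'" using \<open>i \<in> S\<close> by (auto simp: B_def split: if_splits)
      next
        fix i assume "i \<in> S'"
        then have "i \<in> I" using SS by (auto simp: SS_def Oth_def)
        then have "X i \<omega> \<in> B S i" "X i \<omega> \<in> B S' i" using w by (auto simp: Fmem)
        then show "i \<in> S" using \<open>i \<in> S'\<close> by (auto simp: B_def split: if_splits)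
      qed
      with SS show False by simp
    qed
  qed
  have pF: "prob (F S) = (s/T)^card S * ((T-s)/T)^(card I - card S)" if "S \<subseteq> Oth" for S
  proof -
    have "prob (F S) = (\<Prod>i\<in>I. prob (X i -` B S i \<inter> space M))"
      unfolding F_def using I by (intro indep_varsD[OF ind]) (auto simp: Bs)
    also have "\<dots> = (\<Prod>i\<in>I. if i \<in> S then s/T else (T-s)/T)"
      using prob_le[OF X D T s] by (intro prod.cong) (auto simp: B_def)
    also have "\<dots> = (s/T)^card (I \<inter> S) * ((T-s)/T)^card (I - S)"
      using I by (simp add: prod.If_cases Diff_eq)
    also have "I \<inter> S = S" using that by (auto simp: Oth_def)
    also have "card (I - S) = card I - card S" using that I
      by (intro card_Diff_subset) (auto simp: Oth_def intro: finite_subset)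
    finally show ?thesis .
  qed
  have "prob {\<omega>\<in>space M. s < X t \<omega> \<and> card {i\<in>Oth. X i \<omega> \<le> s} < k} = (\<Sum>S\<in>SS. prob (F S))"
    unfolding E using fSS Fs disj by (intro finite_measure_finite_Union) auto
  also have "\<dots> = (\<Sum>S\<in>SS. (s/T)^card S * ((T-s)/T)^(card I - card S))"
    using pF by (intro sum.cong) (auto simp: SS_def)
  also have "\<dots> = (\<Sum>j<k. \<Sum>S\<in>{S. S \<in> SS \<and> card S = j}. (s/T)^card S * ((T-s)/T)^(card I - card S))"
    using fSS by (intro sum.group[symmetric]) (auto simp: SS_def)
  also have "\<dots> = (\<Sum>j<k. real ((card I - 1) choose j) * (s/T)^j * ((T-s)/T)^(card I - j))"
  proof (intro sum.cong refl)
    fix j assume j: "j \<in> {..<k}"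
    have eq: "{S. S \<in> SS \<and> card S = j} = {S. S \<subseteq> Oth \<and> card S = j}" using j by (auto simp: SS_def)
    have "(\<Sum>S\<in>{S. S \<in> SS \<and> card S = j}. (s/T)^card S * ((T-s)/T)^(card I - card S))
        = (\<Sum>S\<in>{S. S \<subseteq> Oth \<and> card S = j}. (s/T)^j * ((T-s)/T)^(card I - j))"
      unfolding eq by (intro sum.cong) auto
    also have "\<dots> = real (card Oth choose j) * ((s/T)^j * ((T-s)/T)^(card I - j))"
      using n_subsets[OF fO, of j] by simp
    finally show "(\<Sum>S\<in>{S. S \<in> SS \<and> card S = j}. (s/T)^card S * ((T-s)/T)^(card I - card S))
        = real ((card I - 1) choose j) * (s/T)^j * ((T-s)/T)^(card I - j)"
      by (simp add: cO)
  qed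
  finally show ?thesis by (simp add: Oth_def)
qed



lemma (in prob_space) expect_from_tail:
  fixes W :: "'a \<Rightarrow> real" and g :: "real \<Rightarrow> real"
  assumes W[measurable]: "W \<in> borel_measurable M"
    and nn: "AE \<omega> in M. 0 \<le> W \<omega>"
    and g: "(g has_integral J) {0..T}" and gnn: "\<And>s. s \<in> {0..T} \<Longrightarrow> 0 \<le> g s"
    and P1: "\<And>s. 0 \<le> s \<Longrightarrow> s \<le> T \<Longrightarrow> prob {\<omega>\<in>space M. s < W \<omega>} = g s"
    and P2: "\<And>s. T < s \<Longrightarrow> prob {\<omega>\<in>space M. s < W \<omega>} = 0"
  shows "integral\<^sup>L M W = J"
proof -
  have "integral\<^sup>L M W = enn2real (\<integral>\<^sup>+\<omega>. ennreal (W \<omega>) \<partial>M)"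
    by (rule integral_eq_nn_integral[OF W nn])
  also have "(\<integral>\<^sup>+\<omega>. ennreal (W \<omega>) \<partial>M) =
         (\<integral>\<^sup>+s. indicator {0..} s * ennreal (prob {\<omega>\<in>space M. s < W \<omega>}) \<partial>lborel)"
    by (rule tail_formula[OF W])
  also have "\<dots> = (\<integral>\<^sup>+s. ennreal (indicator {0..T} s * g s) \<partial>lborel)"
  proof (rule nn_integral_cong)
    fix s :: real
    show "indicator {0..} s * ennreal (prob {\<omega>\<in>space M. s < W \<omega>}) = ennreal (indicator {0..T} s * g s)"
    proof (cases "s < 0")
      case True then show ?thesis by (simp add: indicator_def)
    next
      case False
      show ?thesis
      proof (cases "s \<le> T")
        case True then show ?thesis using False P1[of s] by (simp add: indicator_def)
      next
        case False2: False
        then show ?thesis using False P2[of s] by (simp add: indicator_def)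
      qed
    qed
  qed
  also have "\<dots> = ennreal J"
    by (rule nn_integral_has_integral_lebesgue[OF gnn g])
  finally show ?thesis
    using has_integral_nonneg[OF g gnn] by simp
qed

lemma coef:
  assumes "j < n"
  shows "real ((n-1) choose j) * (fact j * fact (n-j) / fact (j + (n-j) + 1)) = real (n-j) / (real n * (real n + 1))"
proof -
  obtain m where n: "n = Suc m" using assms by (cases n) auto
  have jm: "j \<le> m" using assms n by simp
  have f1: "fact j * fact (m - j) * real (m choose j) = fact m"
    using binomial_fact_lemma[OF jm] by (metis of_nat_fact of_nat_mult)
  have f2: "fact (Suc m - j) = real (Suc m - j) * fact (m - j)"
    using jm by (simp add: Suc_diff_le)
  have f3: "j + (Suc m - j) + 1 = Suc (Suc m)" using jm by simp
  have f4: "(fact (Suc (Suc m)) :: real) = (real m + 2) * (real m + 1) * fact m"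
    by (simp add: algebra_simps)
  have "real (m choose j) * (fact j * (real (Suc m - j) * fact (m - j)) / ((real m + 2) * (real m + 1) * fact m))
      = (fact j * fact (m - j) * real (m choose j)) * real (Suc m - j) / ((real m + 2) * (real m + 1) * fact m)"
    by (simp add: algebra_simps)
  also have "\<dots> = fact m * real (Suc m - j) / ((real m + 2) * (real m + 1) * fact m)"
    by (simp only: f1)
  also have "\<dots> = real (Suc m - j) / ((real m + 2) * (real m + 1))"
    by simp
  finally show ?thesis unfolding n f3 f4 f2
    by (simp add: algebra_simps)
qed

lemma sum_lin:
  assumes "k \<le> n"
  shows "2 * (\<Sum>j<k. real (n-j)) = real n * (real n + 1) - real (n-k) * (real (n-k) + 1)"
  using assms
proof (induction k)
  case 0 then show ?case by simp
next
  case (Suc k)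
  then have "k < n" by simp
  then show ?case using Suc by (simp add: of_nat_diff algebra_simps)
qed



lemma alg: "(T::real) > 0 \<Longrightarrow> (N::real) > 0 \<Longrightarrow> (T/2 - T*(Sg/N))/(T/2) = (N - 2*Sg)/N"
  by (simp add: field_simps)

theorem corollary5:
  fixes M :: "'a measure" and X :: "nat \<Rightarrow> 'a \<Rightarrow> real"
    and n k t :: nat and T :: real
  assumes "prob_space M"
    and "n \<ge> 2" and "1 \<le> k" and "k \<le> n - 1"
    and "T > 0" and "t \<in> {1..n}"
    and "\<And>i. i \<in> {1..n} \<Longrightarrow> X i \<in> borel_measurable M"
    and "prob_space.indep_vars M (\<lambda>_. borel) X {1..n}"
    and "\<And>i. i \<in> {1..n} \<Longrightarrow> distr M borel (X i) = uniform_measure lborel {0..T}"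
  shows "(let Y1 = (\<lambda>\<omega>. X t \<omega>);
              Y2 = (\<lambda>\<omega>. min (X t \<omega>)
                     (kth_smallest k (map (\<lambda>i. X i \<omega>) (filter (\<lambda>i. i \<noteq> t) [1..<n+1]))))
          in ((integral\<^sup>L M Y1 - integral\<^sup>L M Y2) / integral\<^sup>L M Y1))
         = real ((n - k) * (n - k + 1)) / real (n * (n + 1))"
proof -
  interpret prob_space M by fact
  note Xm = assms(7)
  note ind = assms(8)
  note D = assms(9)
  have T: "T > 0" by fact
  define I where "I = {1..n}"
  define L where "L = filter (\<lambda>i. i \<noteq> t) [1..<n+1]"
  define Z where "Z = (\<lambda>\<omega>. kth_smallest k (map (\<lambda>i. X i \<omega>) L))"
  define Oth where "Oth = I - {t}"
  have tI: "t \<in> I" using assms(6) by (simp add: I_def)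
  have cI: "card I = n" by (simp add: I_def)
  have fI: "finite I" by (simp add: I_def)
  have setL: "set L = Oth" by (auto simp: L_def Oth_def I_def)
  have distL: "distinct L" by (simp add: L_def)
  have lenL: "length L = n - 1"
    using distinct_card[OF distL] setL tI cI fI by (simp add: Oth_def)
  have kL: "1 \<le> k" "k \<le> length (map (\<lambda>i. X i \<omega>) L)" for \<omega>
    using assms(3,4) lenL by auto
  have Ziff: "s < Z \<omega> \<longleftrightarrow> card {i\<in>Oth. X i \<omega> \<le> s} < k" for s \<omega>
  proof -
    have "length (filter (\<lambda>x. x \<le> s) (map (\<lambda>i. X i \<omega>) L)) = length (filter (\<lambda>i. X i \<omega> \<le> s) L)"
      by (simp add: filter_map comp_def)
    also have "\<dots> = card (set (filter (\<lambda>i. X i \<omega> \<le> s) L))"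
      using distL by (metis distinct_card distinct_filter length_filter_conv_card set_filter)
    also have "set (filter (\<lambda>i. X i \<omega> \<le> s) L) = {i\<in>Oth. X i \<omega> \<le> s}"
      using setL by auto
    finally show ?thesis unfolding Z_def using kth_iff[OF kL] by simp
  qed
  have cnt: "real (card {i\<in>Oth. X i \<omega> \<le> s}) = (\<Sum>i\<in>Oth. if X i \<omega> \<le> s then 1 else 0)" for s \<omega>
  proof -
    have "finite Oth" using fI by (simp add: Oth_def)
    then show ?thesis by (simp add: sum.If_cases) (metis Collect_conj_eq Collect_mem_eq)
  qed
  have Zm[measurable]: "Z \<in> borel_measurable M"
  proof (rule borel_measurable_iff_greater[THEN iffD2], intro allI)
    fix a :: real
    have "{\<omega>\<in>space M. a < Z \<omega>} = {\<omega>\<in>space M. (\<Sum>i\<in>Oth. if X i \<omega> \<le> a then 1 else 0) < real k}"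
      using Ziff cnt by (metis (no_types, lifting) of_nat_less_iff)
    also have "\<dots> \<in> sets M"
    proof -
      have "(\<lambda>\<omega>. \<Sum>i\<in>Oth. if X i \<omega> \<le> a then 1 else (0::real)) \<in> borel_measurable M"
      proof (intro borel_measurable_sum)
        fix i assume "i \<in> Oth"
        then have [measurable]: "X i \<in> borel_measurable M" using Xm by (auto simp: Oth_def I_def)
        show "(\<lambda>\<omega>. if X i \<omega> \<le> a then 1 else (0::real)) \<in> borel_measurable M" by measurable
      qed
      then show ?thesis by measurable
    qed
    finally show "{\<omega>\<in>space M. a < Z \<omega>} \<in> sets M" .
  qed
  have Xt[measurable]: "X t \<in> borel_measurable M" using Xm tI by (simp add: I_def)
  have Dt: "distr M borel (X t) = uniform_measure lborel {0..T}" using D tI by (simp add: I_def)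
  have nnX: "AE \<omega> in M. \<forall>i\<in>I. 0 \<le> X i \<omega>"
  proof (rule AE_finite_allI[OF fI])
    fix i assume i: "i \<in> I"
    have "AE x in uniform_measure lborel {0..T}. 0 \<le> x"
      by (rule AE_uniform_measureI) auto
    moreover have Di: "distr M borel (X i) = uniform_measure lborel {0..T}" using D i by (simp add: I_def)
    ultimately have "AE x in distr M borel (X i). 0 \<le> x" by (simp only: Di)
    then show "AE \<omega> in M. 0 \<le> X i \<omega>"
      by (rule AE_distrD[rotated]) (use Xm i in \<open>simp add: I_def\<close>)
  qed
  have nnY1: "AE \<omega> in M. 0 \<le> X t \<omega>" using nnX by (rule eventually_mono) (use tI in auto)
  have nnY2: "AE \<omega> in M. 0 \<le> min (X t \<omega>) (Z \<omega>)"
    using nnX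
  proof eventually_elim
    case (elim \<omega>)
    have "0 \<le> Z \<omega>" unfolding Z_def
      by (rule kth_nonneg[OF kL]) (use elim setL in \<open>auto simp: Oth_def\<close>)
    then show ?case using elim tI by auto
  qed
  have E1: "integral\<^sup>L M (X t) = T * (fact 0 * fact 1 / fact (0+1+1))"
  proof (rule expect_from_tail[OF Xt nnY1])
    show "((\<lambda>s. (s/T)^0 * ((T-s)/T)^1) has_integral T * (fact 0 * fact 1 / fact (0+1+1))) {0..T}"
      by (rule beta_scaled[OF T beta_nat])
    show "0 \<le> (s/T)^0 * ((T-s)/T)^1" if "s \<in> {0..T}" for s using that T by auto
    show "prob {\<omega>\<in>space M. s < X t \<omega>} = (s/T)^0 * ((T-s)/T)^1" if "0 \<le> s" "s \<le> T" for s
    proof -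
      have "{\<omega>\<in>space M. s < X t \<omega>} = X t -` {s<..} \<inter> space M" by auto
      then show ?thesis using prob_le(2)[OF Xt Dt T that] by simp
    qed
    show "prob {\<omega>\<in>space M. s < X t \<omega>} = 0" if "T < s" for s
    proof -
      have "{\<omega>\<in>space M. s < X t \<omega>} = X t -` {s<..} \<inter> space M" by auto
      then show ?thesis using prob_gt_big[OF Xt Dt T that] by simp
    qed
  qed
  define c where "c = (\<lambda>j. real ((n-1) choose j))"
  have E2: "integral\<^sup>L M (\<lambda>\<omega>. min (X t \<omega>) (Z \<omega>)) =
      (\<Sum>j<k. c j * (T * (fact j * fact (n-j) / fact (j + (n-j) + 1))))"
  proof (rule expect_from_tail[OF _ nnY2])
    show "(\<lambda>\<omega>. min (X t \<omega>) (Z \<omega>)) \<in> borel_measurable M" by measurable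
    show "((\<lambda>s. \<Sum>j<k. c j * ((s/T)^j * ((T-s)/T)^(n-j))) has_integral
        (\<Sum>j<k. c j * (T * (fact j * fact (n-j) / fact (j + (n-j) + 1))))) {0..T}"
      by (intro has_integral_sum finite_lessThan has_integral_mult_right beta_scaled[OF T beta_nat])
    show "0 \<le> (\<Sum>j<k. c j * ((s/T)^j * ((T-s)/T)^(n-j)))" if "s \<in> {0..T}" for s
      using that T by (intro sum_nonneg) (auto simp: c_def)
    show "prob {\<omega>\<in>space M. s < min (X t \<omega>) (Z \<omega>)} = (\<Sum>j<k. c j * ((s/T)^j * ((T-s)/T)^(n-j)))"
      if "0 \<le> s" "s \<le> T" for s
    proof -
      have "{\<omega>\<in>space M. s < min (X t \<omega>) (Z \<omega>)} =
          {\<omega>\<in>space M. s < X t \<omega> \<and> card {i\<in>I-{t}. X i \<omega> \<le> s} < k}"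
        using Ziff by (auto simp: Oth_def)
      then show ?thesis
        using prob_event[OF fI tI _ ind[unfolded I_def[symmetric]] _ T that, of k] Xm D
        by (simp add: I_def c_def mult.assoc)
    qed
    show "prob {\<omega>\<in>space M. s < min (X t \<omega>) (Z \<omega>)} = 0" if "T < s" for s
    proof -
      have "prob {\<omega>\<in>space M. s < min (X t \<omega>) (Z \<omega>)} \<le> prob (X t -` {s<..} \<inter> space M)"
        by (intro finite_measure_mono) auto
      then show ?thesis using prob_gt_big[OF Xt Dt T that] measure_nonneg[of M] by (metis order_antisym)
    qed
  qed
  have E2': "(\<Sum>j<k. c j * (T * (fact j * fact (n-j) / fact (j + (n-j) + 1))))
      = T * ((\<Sum>j<k. real (n-j)) / (real n * (real n + 1)))"
  proof -
    have "(\<Sum>j<k. c j * (T * (fact j * fact (n-j) / fact (j + (n-j) + 1))))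
        = (\<Sum>j<k. T * (real (n-j) / (real n * (real n + 1))))"
    proof (intro sum.cong refl)
      fix j assume "j \<in> {..<k}"
      then have "j < n" using assms(4) by auto
      from coef[OF this] show "c j * (T * (fact j * fact (n-j) / fact (j + (n-j) + 1)))
          = T * (real (n-j) / (real n * (real n + 1)))"
        unfolding c_def by (metis mult.left_commute)
    qed
    also have "\<dots> = T * ((\<Sum>j<k. real (n-j)) / (real n * (real n + 1)))"
      by (simp add: sum_distrib_left sum_divide_distrib)
    finally show ?thesis .
  qed
  have kn: "k \<le> n" using assms(4) by simp
  have SL: "2 * (\<Sum>j<k. real (n-j)) = real n * (real n + 1) - real (n-k) * (real (n-k) + 1)"
    by (rule sum_lin[OF kn])
  have npos: "real n * (real n + 1) > 0" using assms(2) by simp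
  have E1': "integral\<^sup>L M (X t) = T / 2" using E1 by simp
  have fin: "(T / 2 - T * ((\<Sum>j<k. real (n-j)) / (real n * (real n + 1)))) / (T / 2)
        = real ((n - k) * (n - k + 1)) / real (n * (n + 1))"
  proof -
    define Sg where "Sg = (\<Sum>j<k. real (n-j))"
    have "(T / 2 - T * (Sg / (real n * (real n + 1)))) / (T / 2)
        = (real n * (real n + 1) - 2 * Sg) / (real n * (real n + 1))"
      using alg[OF T npos] .
    also have "\<dots> = real ((n - k) * (n - k + 1)) / real (n * (n + 1))"
    proof -
      have r: "real ((n - k) * (n - k + 1)) / real (n * (n + 1)) = real (n-k) * (real (n-k) + 1) / (real n * (real n + 1))"
        by (simp only: of_nat_mult of_nat_add of_nat_1)
      have "real n * (real n + 1) - 2 * Sg = real (n-k) * (real (n-k) + 1)"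
        using SL unfolding Sg_def by linarith
      then show ?thesis unfolding r by simp
    qed
    finally show ?thesis unfolding Sg_def .
  qed
  have Y2eq: "(\<lambda>\<omega>. min (X t \<omega>) (kth_smallest k (map (\<lambda>i. X i \<omega>) (filter (\<lambda>i. i \<noteq> t) [1..<n+1]))))
      = (\<lambda>\<omega>. min (X t \<omega>) (Z \<omega>))" by (simp add: Z_def L_def)
  show ?thesis
    unfolding Let_def Y2eq E1' E2 E2' by (rule fin)
qed

end
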